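(* Let $m$ be a monitor in open normal form, $s\in\mathit{Act}^*$ and $x$ a variable such that $m\xrightarrow{s}m_s$ for some $m_s$ having $x$ as a summand. Then $\mathcal{E}_v\vdash m=m'+s.x$ for some monitor $m'$ such that there is no $m''$ with $m'\xrightarrow{s}m''$ and $m''$ having $x$ as a summand.
   Context: Monitors: terms $m,n ::= v \mid a.m \mid m+n \mid x$ over a nonempty action set $\mathit{Act}$ and variables $x$, verdicts $v::=\mathit{end}\mid\mathit{yes}\mid\mathit{no}$. Terms are considered modulo A1–A4 below; a term $t$ has $x$ as a summand if $t=x+t'$ modulo A1–A4 for some $t'$; $\sum_{i\in I}m_i$ is $\mathit{end}$ for $I=\emptyset$. For $s=a_1\dots a_k$, $s.m$ denotes $a_1.(\cdots a_k.m)$ ($\varepsilon.m=m$), and $m\xrightarrow{s}m'$ means $m=m_0\xrightarrow{a_1}m_1\cdots\xrightarrow{a_k}m_k=m'$, where $\xrightarrow{a}$ is the least relation with $a.m\xrightarrow{a}m$, $m\xrightarrow{a}m'$ implying $m+n\xrightarrow{a}m'$ and $n+m\xrightarrow{a}m'$, and $v\xrightarrow{a}v$ for verdicts $v$ (variables have no transitions). An open normal form is a term $\sum_{a\in A}a.m_a+\sum_{i\in I}x_i\ [+\mathit{yes}]\ [+\mathit{no}]$ with $A\subseteq\mathit{Act}$ finite (one summand per $a\in A$), $\{x_i\mid i\in I\}$ a finite set of distinct variables, and each $m_a$ an open normal form different from $\mathit{end}$. $\mathcal{E}\vdash m=n$ denotes derivability by the rules of equational logic. $\mathcal{E}_v$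 consists of (A1) $x+y=y+x$; (A2) $x+(y+z)=(x+y)+z$; (A3) $x+x=x$; (A4) $x+\mathit{end}=x$; and, for each $a\in\mathit{Act}$, ($E_a$) $a.\mathit{end}=\mathit{end}$; ($Y_a$) $\mathit{yes}=\mathit{yes}+a.\mathit{yes}$; ($N_a$) $\mathit{no}=\mathit{no}+a.\mathit{no}$; ($D_a$) $a.(x+y)=a.x+a.y$. *)

theory Defs
  imports Main
begin

datatype ('a, 'x) mon =
    End | Yes | No
  | Pre 'a "('a, 'x) mon"
  | Plus "('a, 'x) mon" "('a, 'x) mon"
  | Var 'x

inductive ac :: "('a, 'x) mon \<Rightarrow> ('a, 'x) mon \<Rightarrow> bool" where
  ac_A1: "ac (Plus t u) (Plus u t)"
| ac_A2: "ac (Plus t (Plus u w)) (Plus (Plus t u) w)"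
| ac_A3: "ac (Plus t t) t"
| ac_A4: "ac (Plus t End) t"
| ac_refl: "ac t t"
| ac_sym: "ac t u \<Longrightarrow> ac u t"
| ac_trans: "ac t u \<Longrightarrow> ac u w \<Longrightarrow> ac t w"
| ac_Pre: "ac t u \<Longrightarrow> ac (Pre a t) (Pre a u)"
| ac_Plus: "ac t1 u1 \<Longrightarrow> ac t2 u2 \<Longrightarrow> ac (Plus t1 t2) (Plus u1 u2)"

inductive Ev :: "('a, 'x) mon \<Rightarrow> ('a, 'x) mon \<Rightarrow> bool" where
  Ev_A1: "Ev (Plus t u) (Plus u t)"
| Ev_A2: "Ev (Plus t (Plus u w)) (Plus (Plus t u) w)"
| Ev_A3: "Ev (Plus t t) t"
| Ev_A4: "Ev (Plus t End) t"
| Ev_E: "Ev (Pre a End) End"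
| Ev_Y: "Ev Yes (Plus Yes (Pre a Yes))"
| Ev_N: "Ev No (Plus No (Pre a No))"
| Ev_D: "Ev (Pre a (Plus t u)) (Plus (Pre a t) (Pre a u))"
| Ev_refl: "Ev t t"
| Ev_sym: "Ev t u \<Longrightarrow> Ev u t"
| Ev_trans: "Ev t u \<Longrightarrow> Ev u w \<Longrightarrow> Ev t w"
| Ev_Pre: "Ev t u \<Longrightarrow> Ev (Pre a t) (Pre a u)"
| Ev_Plus: "Ev t1 u1 \<Longrightarrow> Ev t2 u2 \<Longrightarrow> Ev (Plus t1 t2) (Plus u1 u2)"

inductive step :: "('a, 'x) mon \<Rightarrow> 'a \<Rightarrow> ('a, 'x) mon \<Rightarrow> bool" where
  step_Pre: "step (Pre a m) a m"
| step_PlusL: "step m a m' \<Longrightarrow> step (Plus m n) a m'"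
| step_PlusR: "step m a m' \<Longrightarrow> step (Plus n m) a m'"
| step_End: "step End a End"
| step_Yes: "step Yes a Yes"
| step_No: "step No a No"

inductive steps :: "('a, 'x) mon \<Rightarrow> 'a list \<Rightarrow> ('a, 'x) mon \<Rightarrow> bool" where
  steps_Nil: "steps m [] m"
| steps_Cons: "step m a m1 \<Longrightarrow> steps m1 s m2 \<Longrightarrow> steps m (a # s) m2"

definition prefix :: "'a list \<Rightarrow> ('a, 'x) mon \<Rightarrow> ('a, 'x) mon" where
  "prefix s m = foldr Pre s m"

definition has_summand :: "('a, 'x) mon \<Rightarrow> 'x \<Rightarrow> bool" where
  "has_summand t x \<longleftrightarrow> (\<exists>t'. ac t (Plus (Var x) t'))"

definition sumT :: "('a, 'x) mon list \<Rightarrow> ('a, 'x) mon" where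
  "sumT ts = foldr Plus ts End"

inductive onf :: "('a, 'x) mon \<Rightarrow> bool" where
  onf_intro:
  "distinct (map fst ps) \<Longrightarrow> distinct xs \<Longrightarrow>
   (\<forall>p\<in>set ps. onf (snd p) \<and> \<not> ac (snd p) End) \<Longrightarrow>
   ac m (sumT (map (\<lambda>p. Pre (fst p) (snd p)) ps @ map Var xs
               @ (if y then [Yes] else []) @ (if n then [No] else []))) \<Longrightarrow>
   onf m"

end

theory Submission
  imports Defs
begin

fun tv :: "('a, 'x) mon \<Rightarrow> 'x set" where
  "tv (Var y) = {y}"
| "tv (Plus t u) = tv t \<union> tv u"
| "tv _ = {}"

lemma ac_tv: "ac t u \<Longrightarrow> tv t = tv u"
  by (induction rule: ac.induct) auto

lemma hs_tv: "has_summand t x \<Longrightarrow> x \<in> tv t"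
  unfolding has_summand_def using ac_tv by fastforce

lemma tv_sumT: "tv (sumT l) = (\<Union>t\<in>set l. tv t)"
  by (induction l) (auto simp: sumT_def)

lemma sumT_Cons: "sumT (t # l) = Plus t (sumT l)"
  by (simp add: sumT_def)

lemmas ac_trans' [trans] = ac.ac_trans

lemma ac_Ev: "ac t u \<Longrightarrow> Ev t u"
  by (induction rule: ac.induct) (auto intro: Ev.intros)

inductive_simps step_Plus: "step (Plus m n) a m'"
inductive_simps step_Pre: "step (Pre b m) a m'"
inductive_simps step_End: "step End a m'"
inductive_simps step_Yes: "step Yes a m'"
inductive_simps step_No: "step No a m'"
inductive_simps step_Var: "step (Var y) a m'"
lemmas step_simps = step_Plus step_Pre step_End step_Yes step_No step_Var

inductive_simps steps_Nil': "steps m [] m'"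
inductive_simps steps_Cons': "steps m (a # s) m'"

definition Sim :: "('a,'x) mon \<Rightarrow> ('a,'x) mon \<Rightarrow> bool" where
  "Sim t u \<longleftrightarrow> (\<forall>a t1. step t a t1 \<longrightarrow> (\<exists>u1. step u a u1 \<and> ac t1 u1) \<or> ac t1 End)"

lemma Sim_Plus: "Sim t1 u1 \<Longrightarrow> Sim t2 u2 \<Longrightarrow> Sim (Plus t1 t2) (Plus u1 u2)"
  unfolding Sim_def step_Plus by blast

lemma Sim_trans: "Sim t u \<Longrightarrow> Sim u w \<Longrightarrow> Sim t w"
  unfolding Sim_def by (meson ac.ac_trans)

lemma sim0: "ac t u \<Longrightarrow> Sim t u \<and> Sim u t"
proof (induction rule: ac.induct)
  case (ac_trans t u w)
  then show ?case using Sim_trans by blast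
next
  case (ac_Plus t1 u1 t2 u2)
  then show ?case using Sim_Plus by blast
qed (auto simp: Sim_def step_simps intro: ac.intros)

lemma sim: "ac t u \<Longrightarrow>
  (\<forall>a t1. step t a t1 \<longrightarrow> (\<exists>u1. step u a u1 \<and> ac t1 u1) \<or> ac t1 End)"
  using sim0 unfolding Sim_def by blast

lemma dead: "steps t s t2 \<Longrightarrow> ac t End \<Longrightarrow> \<not> has_summand t2 x"
proof (induction rule: steps.induct)
  case (steps_Nil m)
  then show ?case using hs_tv ac_tv by fastforce
next
  case (steps_Cons m a m1 s m2)
  from sim[OF steps_Cons.prems] steps_Cons.hyps(1) have "ac m1 End"
    by (auto simp: step_simps)
  then show ?case using steps_Cons.IH by blast
qed

lemma R_ac: "steps t s t2 \<Longrightarrow> has_summand t2 x \<Longrightarrow> ac t u \<Longrightarrow>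
   \<exists>u2. steps u s u2 \<and> has_summand u2 x"
proof (induction arbitrary: u rule: steps.induct)
  case (steps_Nil m)
  then show ?case unfolding has_summand_def
    by (meson ac.ac_sym ac.ac_trans steps.steps_Nil)
next
  case (steps_Cons m a m1 s m2)
  from sim[OF steps_Cons.prems(2)] steps_Cons.hyps(1)
  have "(\<exists>u1. step u a u1 \<and> ac m1 u1) \<or> ac m1 End" by blast
  then show ?case
  proof
    assume "\<exists>u1. step u a u1 \<and> ac m1 u1"
    then obtain u1 where "step u a u1" "ac m1 u1" by blast
    then show ?thesis using steps_Cons.IH steps_Cons.prems(1) steps.steps_Cons by meson
  next
    assume "ac m1 End"
    then show ?thesis using dead[OF steps_Cons.hyps(2), of x] steps_Cons.prems(1) by simp
  qed
qed

lemma verdict_steps: "steps t s t2 \<Longrightarrow> t = Yes \<or> t = No \<Longrightarrow> t2 = t"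
  by (induction rule: steps.induct) (auto simp: step_simps)

lemma verdict_dead: "steps t s t2 \<Longrightarrow> t = Yes \<or> t = No \<Longrightarrow> \<not> has_summand t2 x"
  using verdict_steps hs_tv by fastforce

lemma step_sumT: "step (sumT L) a N1 \<Longrightarrow> N1 = End \<or> (\<exists>t\<in>set L. step t a N1)"
  by (induction L) (auto simp: sumT_def step_simps)

lemma absorb: "t \<in> set l \<Longrightarrow> ac (Plus t (sumT l)) (sumT l)"
proof (induction l)
  case Nil then show ?case by simp
next
  case (Cons u l)
  show ?case
  proof (cases "t = u")
    case True
    then show ?thesis unfolding sumT_Cons
      by (meson ac.ac_A2 ac.ac_A3 ac.ac_Plus ac.ac_refl ac.ac_trans)
  next
    case False
    then have h: "ac (Plus t (sumT l)) (sumT l)" using Cons by simp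
    have "ac (Plus t (Plus u (sumT l))) (Plus (Plus t u) (sumT l))" by (rule ac_A2)
    also have "ac \<dots> (Plus (Plus u t) (sumT l))" by (intro ac_Plus ac_A1 ac_refl)
    also have "ac \<dots> (Plus u (Plus t (sumT l)))" by (rule ac_sym, rule ac_A2)
    also have "ac \<dots> (Plus u (sumT l))" by (intro ac_Plus ac_refl h)
    finally show ?thesis unfolding sumT_Cons .
  qed
qed

lemma absorb_list: "set l1 \<subseteq> set l2 \<Longrightarrow> ac (Plus (sumT l1) (sumT l2)) (sumT l2)"
proof (induction l1)
  case Nil
  have "ac (Plus End (sumT l2)) (Plus (sumT l2) End)" by (rule ac_A1)
  also have "ac \<dots> (sumT l2)" by (rule ac_A4)
  finally show ?case by (simp add: sumT_def)
next
  case (Cons a l1)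
  have "ac (Plus (Plus a (sumT l1)) (sumT l2)) (Plus a (Plus (sumT l1) (sumT l2)))"
    by (rule ac_sym, rule ac_A2)
  also have "ac \<dots> (Plus a (sumT l2))" using Cons by (intro ac_Plus ac_refl) auto
  also have "ac \<dots> (sumT l2)" using Cons by (intro absorb) auto
  finally show ?case unfolding sumT_Cons .
qed

lemma set_ac: "set l1 = set l2 \<Longrightarrow> ac (sumT l1) (sumT l2)"
proof -
  assume e: "set l1 = set l2"
  have "ac (sumT l1) (Plus (sumT l2) (sumT l1))" using absorb_list[of l2 l1] e by (metis ac.ac_sym order_refl)
  also have "ac \<dots> (Plus (sumT l1) (sumT l2))" by (rule ac_A1)
  also have "ac \<dots> (sumT l2)" using absorb_list[of l1 l2] e by auto
  finally show ?thesis .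
qed

lemmas Ev_trans' [trans] = Ev.Ev_trans

lemma rearr: "ac (Plus (Plus A B) C) (Plus (Plus A C) B)"
proof -
  have "ac (Plus (Plus A B) C) (Plus A (Plus B C))" by (rule ac_sym, rule ac_A2)
  also have "ac \<dots> (Plus A (Plus C B))" by (intro ac_Plus ac_refl ac_A1)
  also have "ac \<dots> (Plus (Plus A C) B)" by (rule ac_A2)
  finally show ?thesis .
qed

lemma prefix_Cons: "prefix (a # s) v = Pre a (prefix s v)"
  by (simp add: prefix_def)

lemma elemsL: "t \<in> set (map (\<lambda>p. Pre (fst p) (snd p)) ps @ map Var xs
               @ (if y then [Yes] else []) @ (if n then [No] else [])) \<Longrightarrow> (\<exists>b w. t = Pre b w \<and> (b,w) \<in> set ps) \<or> (\<exists>y. t = Var y) \<or> t = Yes \<or> t = No"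
  by (auto split: if_splits)

lemma tvelL: "t \<in> set (map (\<lambda>p. Pre (fst p) (snd p)) ps @ map Var xs
               @ (if y then [Yes] else []) @ (if n then [No] else [])) \<Longrightarrow> x \<in> tv t \<Longrightarrow> t = Var x"
  using elemsL[of t ps xs y n] by auto

lemma in_tv: "x \<in> tv (sumT L) \<Longrightarrow> \<exists>t\<in>set L. x \<in> tv t" by (simp add: tv_sumT)

lemma main: "onf m \<Longrightarrow> steps m s ms \<Longrightarrow> has_summand ms x \<Longrightarrow>
  \<exists>m'. Ev m (Plus m' (prefix s (Var x))) \<and> \<not> (\<exists>m''. steps m' s m'' \<and> has_summand m'' x)"
proof (induction s arbitrary: m ms)
  case Nil
  obtain ps xs y n where d1: "distinct (map fst ps)"
    and hp: "\<forall>p\<in>set ps. onf (snd p) \<and> \<not> ac (snd p) End"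
    and acm: "ac m (sumT (map (\<lambda>p. Pre (fst p) (snd p)) ps @ map Var xs
               @ (if y then [Yes] else []) @ (if n then [No] else [])))"
    using Nil.prems(1) by (cases rule: onf.cases) blast
  define L :: "('a,'b) mon list" where "L = map (\<lambda>p. Pre (fst p) (snd p)) ps @ map Var xs
               @ (if y then [Yes] else []) @ (if n then [No] else [])"
  have acL: "ac m (sumT L)" using acm L_def by simp
  have elems: "\<And>t. t \<in> set L \<Longrightarrow> (\<exists>b w. t = Pre b w \<and> (b,w) \<in> set ps) \<or> (\<exists>y. t = Var y) \<or> t = Yes \<or> t = No"
    unfolding L_def by (rule elemsL)
  have tvel: "\<And>t. t \<in> set L \<Longrightarrow> x \<in> tv t \<Longrightarrow> t = Var x"
    unfolding L_def by (rule tvelL)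
  have "ms = m" using Nil.prems(2) by (simp add: steps_Nil')
  then have "x \<in> tv m" using hs_tv Nil.prems(3) by simp
  then have "x \<in> tv (sumT L)" using ac_tv[OF acL] by simp
  from in_tv[OF this] obtain t0 where t0: "t0 \<in> set L" "x \<in> tv t0" by blast
  have "t0 = Var x" using tvel[OF t0(1) t0(2)] .
  then have VL: "Var x \<in> set L" using t0(1) by simp
  define L0 where "L0 = filter (\<lambda>t. t \<noteq> Var x) L"
  have se: "set (Var x # L0) = set L" using VL L0_def by auto
  have "ac (sumT L) (Plus (Var x) (sumT L0))" using set_ac[OF se[symmetric]] by (simp add: sumT_Cons)
  then have "ac m (Plus (sumT L0) (Var x))" using ac.ac_trans[OF acL ac.ac_trans[OF _ ac_A1]] by blast
  then have E: "Ev m (Plus (sumT L0) (prefix [] (Var x)))" by (simp add: prefix_def ac_Ev)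
  have "\<not> (\<exists>m''. steps (sumT L0) [] m'' \<and> has_summand m'' x)"
  proof
    assume "\<exists>m''. steps (sumT L0) [] m'' \<and> has_summand m'' x"
    then have "x \<in> tv (sumT L0)" using hs_tv by (auto simp: steps_Nil')
    from in_tv[OF this] obtain t where "t \<in> set L0" "x \<in> tv t" by blast
    then have "t \<in> set L" "t \<noteq> Var x" by (simp_all add: L0_def)
    then show False using tvel \<open>x \<in> tv t\<close> by blast
  qed
  then show ?case using E by blast
next
  case (Cons a s)
  obtain ps xs y n where d1: "distinct (map fst ps)"
    and hp: "\<forall>p\<in>set ps. onf (snd p) \<and> \<not> ac (snd p) End"
    and acm: "ac m (sumT (map (\<lambda>p. Pre (fst p) (snd p)) ps @ map Var xs
               @ (if y then [Yes] else []) @ (if n then [No] else [])))"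
    using Cons.prems(1) by (cases rule: onf.cases) blast
  define L :: "('a,'b) mon list" where "L = map (\<lambda>p. Pre (fst p) (snd p)) ps @ map Var xs
               @ (if y then [Yes] else []) @ (if n then [No] else [])"
  have acL: "ac m (sumT L)" using acm L_def by simp
  have elems: "\<And>t. t \<in> set L \<Longrightarrow> (\<exists>b w. t = Pre b w \<and> (b,w) \<in> set ps) \<or> (\<exists>y. t = Var y) \<or> t = Yes \<or> t = No"
    unfolding L_def by (rule elemsL)
  have PL: "Pre b w \<in> set L" if h: "(b,w) \<in> set ps" for b w
  proof -
    have "Pre b w \<in> set (map (\<lambda>p. Pre (fst p) (snd p)) ps)"
      using h by (simp add: image_iff) (metis fst_conv snd_conv)
    then show ?thesis by (simp add: L_def)
  qed
  obtain ms2 where "steps (sumT L) (a # s) ms2" "has_summand ms2 x"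
    using R_ac[OF Cons.prems(2) Cons.prems(3) acL] by blast
  then obtain N1 where st: "step (sumT L) a N1" and sts: "steps N1 s ms2" and hs2: "has_summand ms2 x"
    by (auto simp: steps_Cons')
  have "\<exists>u. (a,u) \<in> set ps \<and> N1 = u"
  proof -
    from step_sumT[OF st] have "N1 = End \<or> (\<exists>t\<in>set L. step t a N1)" .
    then show ?thesis
    proof
      assume "N1 = End"
      then show ?thesis using dead[OF sts] hs2 ac_refl by blast
    next
      assume "\<exists>t\<in>set L. step t a N1"
      then obtain t where t: "t \<in> set L" "step t a N1" by blast
      from elems[OF t(1)] show ?thesis
      proof (elim disjE exE conjE)
        fix b w assume "t = Pre b w" "(b,w) \<in> set ps"
        then show ?thesis using t(2) by (auto simp: step_simps)
      next
        fix z assume "t = Var z" then show ?thesis using t(2) by (simp add: step_simps)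
      next
        assume "t = Yes" then have "N1 = Yes" using t(2) by (simp add: step_simps)
        then show ?thesis using verdict_dead[OF sts] hs2 by blast
      next
        assume "t = No" then have "N1 = No" using t(2) by (simp add: step_simps)
        then show ?thesis using verdict_dead[OF sts] hs2 by blast
      qed
    qed
  qed
  then obtain u where up: "(a,u) \<in> set ps" and N1u: "N1 = u" by blast
  have "onf u" using hp up by fastforce
  from Cons.IH[OF this sts[unfolded N1u] hs2] obtain t' where
    IH1: "Ev u (Plus t' (prefix s (Var x)))" and
    IH2: "\<not> (\<exists>m''. steps t' s m'' \<and> has_summand m'' x)" by blast
  define L0 where "L0 = filter (\<lambda>t. t \<noteq> Pre a u) L"
  define P where "P = prefix s (Var x)"
  have se: "set (Pre a u # L0) = set L" using PL[OF up] L0_def by auto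
  have "ac (sumT L) (Plus (Pre a u) (sumT L0))" using set_ac[OF se[symmetric]] by (simp add: sumT_Cons)
  then have "Ev m (Plus (Pre a u) (sumT L0))" using ac_Ev[OF ac.ac_trans[OF acL]] by blast
  also have "Ev \<dots> (Plus (Pre a (Plus t' P)) (sumT L0))"
    using IH1 P_def by (intro Ev_Plus Ev_Pre Ev_refl) auto
  also have "Ev \<dots> (Plus (Plus (Pre a t') (Pre a P)) (sumT L0))"
    by (intro Ev_Plus Ev_D Ev_refl)
  also have "Ev \<dots> (Plus (Plus (Pre a t') (sumT L0)) (Pre a P))"
    by (intro ac_Ev rearr)
  finally have E: "Ev m (Plus (Plus (Pre a t') (sumT L0)) (prefix (a # s) (Var x)))"
    by (simp add: prefix_Cons P_def)
  have "\<not> (\<exists>m''. steps (Plus (Pre a t') (sumT L0)) (a # s) m'' \<and> has_summand m'' x)"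
  proof
    assume "\<exists>m''. steps (Plus (Pre a t') (sumT L0)) (a # s) m'' \<and> has_summand m'' x"
    then obtain m1 m'' where s1: "step (Plus (Pre a t') (sumT L0)) a m1"
      and s2: "steps m1 s m''" and h: "has_summand m'' x"
      by (auto simp: steps_Cons')
    from s1 have "m1 = t' \<or> step (sumT L0) a m1" by (auto simp: step_simps)
    then show False
    proof
      assume "m1 = t'" then show False using IH2 s2 h by blast
    next
      assume "step (sumT L0) a m1"
      from step_sumT[OF this] show False
      proof
        assume "m1 = End" then show False using dead[OF s2] h ac_refl by blast
      next
        assume "\<exists>t\<in>set L0. step t a m1"
        then obtain t where t: "t \<in> set L" "t \<noteq> Pre a u" "step t a m1"
          using L0_def by auto
        from elems[OF t(1)] show False
        proof (elim disjE exE conjE)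
          fix b w assume tb: "t = Pre b w" "(b,w) \<in> set ps"
          then have "b = a" using t(3) by (simp add: step_simps)
          then have "w = u" using tb(2) up d1 by (meson eq_key_imp_eq_value)
          then show False using t(2) tb \<open>b = a\<close> by simp
        next
          fix z assume "t = Var z" then show False using t(3) by (simp add: step_simps)
        next
          assume "t = Yes" then have "m1 = Yes" using t(3) by (simp add: step_simps)
          then show False using verdict_dead[OF s2] h by blast
        next
          assume "t = No" then have "m1 = No" using t(3) by (simp add: step_simps)
          then show False using verdict_dead[OF s2] h by blast
        qed
      qed
    qed
  qed
  then show ?case using E by blast
qed

theorem mainTheorem13:
  fixes m ms :: "('a, 'x) mon" and s :: "'a list" and x :: 'x
  assumes "onf m"
    and "steps m s ms"
    and "has_summand ms x"
  shows "\<exists>m'. Ev m (Plus m' (prefix s (Var x)))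
              \<and> \<not> (\<exists>m''. steps m' s m'' \<and> has_summand m'' x)"
  by (rule main[OF assms])

end
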